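(* Let $n\ge1$. Let $X_{2n,2n}$ be the graph with vertices $x_{i,j}$ ($1\le i,j\le 2n$), where $x_{i,j}x_{i',j'}$ is an edge iff $i'=i+1$ and $j\ge j'$. Let $Y_{2n,2n}$ be the graph with vertices $y_{i,j}$ ($1\le i,j\le 2n$) where $y_{i,j}y_{i',j'}$ is an edge iff (1) $i$ odd, $i'=i+1$, $j\ge j'$; or (2) $i$ even, $i'=i+1$, $j<j'$; or (3) $i$ even, $i'$ odd, $i'\ge i+3$; or (4) $i$ odd, $i'=i-1$, $j=1$. Starting from $X_{2n,2n}$, perform successively the pivots on the edges $x_{2n-1,1}x_{2n,1},\ x_{2n-3,1}x_{2n-2,1},\ \dots,\ x_{1,1}x_{2,1}$ (in this order, i.e.\ $n$ pivots on alternate edges of the bottom row, acting from right to left). The resulting graph is (isomorphic to) $Y_{2n,2n}$.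
   Context: For a graph $G=(V,E)$ and $v\in V$, the local complementation $G*v$ is the graph on $V$ with edge set $E\,\triangle\,\{xy: xv,yv\in E,\ x\neq y\}$ (the subgraph induced on the neighbourhood of $v$ is complemented). For an edge $uv$, the pivot of $G$ on $uv$ is $G*u*v*u$; it is known to be symmetric in $u,v$, and its effect is to complement the adjacencies between the three sets $N(u)\cap N(v)$, $N(u)\setminus N(v)$ and $N(v)\setminus N(u)$. In the grids, $i$ is the column index and $j$ the row index, row $1$ being the bottom row. *)

theory Defs
  imports Main
begin

text \<open>Graphs are given by an adjacency predicate (symmetric, irreflexive) on a vertex type.\<close>
type_synonym 'a graph = "'a \<Rightarrow> 'a \<Rightarrow> bool"

definition local_comp :: "'a graph \<Rightarrow> 'a \<Rightarrow> 'a graph" where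
  "local_comp G v = (\<lambda>x y. if x \<noteq> y \<and> G x v \<and> G y v then \<not> G x y else G x y)"

definition pivot :: "'a graph \<Rightarrow> 'a \<Rightarrow> 'a \<Rightarrow> 'a graph" where
  "pivot G u v = local_comp (local_comp (local_comp G u) v) u"

text \<open>Vertex set of the 2n x 2n grid; a vertex (i,j) has column i and row j.\<close>
definition grid :: "nat \<Rightarrow> (nat \<times> nat) set" where
  "grid n = {1..2*n} \<times> {1..2*n}"

definition X_rel :: "nat \<times> nat \<Rightarrow> nat \<times> nat \<Rightarrow> bool" where
  "X_rel p q = (fst q = fst p + 1 \<and> snd p \<ge> snd q)"

definition X_graph :: "nat \<Rightarrow> (nat \<times> nat) graph" where
  "X_graph n p q = (p \<in> grid n \<and> q \<in> grid n \<and> (X_rel p q \<or> X_rel q p))"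

definition Y_rel :: "nat \<times> nat \<Rightarrow> nat \<times> nat \<Rightarrow> bool" where
  "Y_rel p q = (let i = fst p; j = snd p; i' = fst q; j' = snd q in
      (odd i \<and> i' = i + 1 \<and> j \<ge> j') \<or>
      (even i \<and> i' = i + 1 \<and> j < j') \<or>
      (even i \<and> odd i' \<and> i' \<ge> i + 3) \<or>
      (odd i \<and> i' + 1 = i \<and> j = 1))"

definition Y_graph :: "nat \<Rightarrow> (nat \<times> nat) graph" where
  "Y_graph n p q = (p \<in> grid n \<and> q \<in> grid n \<and> (Y_rel p q \<or> Y_rel q p))"

fun pivots :: "nat \<Rightarrow> (nat \<times> nat) graph \<Rightarrow> (nat \<times> nat) graph" where
  "pivots 0 G = G"
| "pivots (Suc k) G = pivots k (pivot G (2*k+1, 1) (2*k+2, 1))"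

definition graph_iso_on :: "'a set \<Rightarrow> 'a graph \<Rightarrow> 'b set \<Rightarrow> 'b graph \<Rightarrow> bool" where
  "graph_iso_on V G W H = (\<exists>f. bij_betw f V W \<and> (\<forall>p\<in>V. \<forall>q\<in>V. G p q = H (f p) (f q)))"

end

theory Submission
  imports Defs
begin


definition sw :: "nat \<Rightarrow> nat \<times> nat \<Rightarrow> nat \<times> nat" where
 "sw k p = (if snd p = 1 \<and> fst p > 2*k then (if odd (fst p) then (fst p + 1, 1) else (fst p - 1, 1)) else p)"

definition Zr :: "nat \<Rightarrow> nat \<times> nat \<Rightarrow> nat \<times> nat \<Rightarrow> bool" where
 "Zr k p q = (let i = fst p; j = snd p; i' = fst q; j' = snd q in
   if max i i' \<le> 2*k then (i' = i+1 \<and> j' \<le> j) else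
   (odd i \<and> i' = i+1 \<and> j \<ge> j') \<or> (even i \<and> i' = i+1 \<and> j < j') \<or>
   (even i \<and> i \<ge> 2*k \<and> odd i' \<and> i' \<ge> i+3) \<or> (odd i \<and> i'+1 = i \<and> j = 1))"

definition H :: "nat \<Rightarrow> nat \<Rightarrow> (nat \<times> nat) graph" where
 "H n k p q = (p \<in> grid n \<and> q \<in> grid n \<and> (Zr k (sw k p) (sw k q) \<or> Zr k (sw k q) (sw k p)))"

definition col :: "nat \<Rightarrow> nat \<Rightarrow> nat \<Rightarrow> nat" where
 "col k i j = (if j = 1 \<and> i > 2*k then (if i mod 2 = 1 then i + 1 else i - 1) else i)"

definition Zn :: "nat \<Rightarrow> nat \<Rightarrow> nat \<Rightarrow> nat \<Rightarrow> nat \<Rightarrow> bool" where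
 "Zn k i j i' j' = (if i \<le> 2*k \<and> i' \<le> 2*k then (i' = i+1 \<and> j' \<le> j) else
   (i mod 2 = 1 \<and> i' = i+1 \<and> j \<ge> j') \<or> (i mod 2 = 0 \<and> i' = i+1 \<and> j < j') \<or>
   (i mod 2 = 0 \<and> i \<ge> 2*k \<and> i' mod 2 = 1 \<and> i' \<ge> i+3) \<or> (i mod 2 = 1 \<and> i'+1 = i \<and> j = 1))"

lemma H_expl: "H n k (i,j) (i',j') = ((1 \<le> i \<and> i \<le> 2*n \<and> 1 \<le> j \<and> j \<le> 2*n) \<and> (1 \<le> i' \<and> i' \<le> 2*n \<and> 1 \<le> j' \<and> j' \<le> 2*n) \<and>
   (Zn k (col k i j) j (col k i' j') j' \<or> Zn k (col k i' j') j' (col k i j) j))"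
proof -
  have s: "sw k (a,b) = (col k a b, b)" for a b
    by (simp add: sw_def col_def odd_iff_mod_2_eq_one)
  have z: "Zr k (a,b) (c,d) = Zn k a b c d" for a b c d
    by (simp add: Zr_def Zn_def Let_def even_iff_mod_2_eq_zero odd_iff_mod_2_eq_one max_def)
  show ?thesis unfolding H_def s z grid_def by auto
qed

lemma par_cases:
  fixes i :: nat
  obtains a where "i = 2*a" | a where "i = 2*a+1"
  by (metis oddE evenE)

lemma reg4:
  fixes a k :: nat
  obtains "a < k" | "a = k" | "a = k+1" | "a > k+1" by linarith

lemma m0: "(2*a) mod 2 = (0::nat)" by simp
lemma m1: "(2*a+1) mod 2 = (1::nat)" by simp

lemma Zdiff:
  assumes "\<not> (i = 2*k+1 \<and> j = 1)" "\<not> (i = 2*k+2 \<and> j = 1)" "\<not> (i' = 2*k+1 \<and> j' = 1)" "\<not> (i' = 2*k+2 \<and> j' = 1)"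
  shows "(Zn k i j i' j' \<or> Zn k i' j' i j) = ((Zn (Suc k) i j i' j' \<or> Zn (Suc k) i' j' i j) \<noteq>
     ((i = 2*k \<and> i' mod 2 = 1 \<and> i' \<ge> 2*k+1) \<or> (i' = 2*k \<and> i mod 2 = 1 \<and> i \<ge> 2*k+1)))"
proof -
  show ?thesis
  proof (cases i rule: par_cases)
    case (1 a)
    then show ?thesis
    proof (cases i' rule: par_cases)
      case (1 b)
      then show ?thesis using assms \<open>i = 2*a\<close> unfolding Zn_def \<open>i = 2*a\<close> \<open>i' = _\<close> m0 m1 by (cases a k rule: reg4; cases b k rule: reg4; auto)
    next
      case (2 b)
      then show ?thesis using assms \<open>i = 2*a\<close> unfolding Zn_def \<open>i = 2*a\<close> \<open>i' = _\<close> m0 m1 by (cases a k rule: reg4; cases b k rule: reg4; auto)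
    qed
  next
    case (2 a)
    then show ?thesis
    proof (cases i' rule: par_cases)
      case (1 b)
      then show ?thesis using assms \<open>i = 2*a+1\<close> unfolding Zn_def \<open>i = 2*a+1\<close> \<open>i' = _\<close> m0 m1 by (cases a k rule: reg4; cases b k rule: reg4; auto)
    next
      case (2 b)
      then show ?thesis using assms \<open>i = 2*a+1\<close> unfolding Zn_def \<open>i = 2*a+1\<close> \<open>i' = _\<close> m0 m1 by (cases a k rule: reg4; cases b k rule: reg4; auto)
    qed
  qed
qed

lemma nbA:
  assumes "k < n"
  shows "H n (Suc k) (i,j) (2*k+1,1) \<longleftrightarrow> (i,j) \<in> grid n \<and> (i = 2*k \<or> (i = 2*k+2 \<and> j = 1))"
  using assms unfolding H_def Zr_def sw_def grid_def
  by (auto simp: Let_def split: if_splits; presburger)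

lemma nbB:
  assumes "k < n"
  shows "H n (Suc k) (i,j) (2*k+2,1) \<longleftrightarrow> (i,j) \<in> grid n \<and> (i = 2*k+1 \<or> (odd i \<and> i \<ge> 2*k+3 \<and> j \<ge> 2) \<or> (even i \<and> i \<ge> 2*k+4 \<and> j = 1))"
  using assms unfolding H_def Zr_def sw_def grid_def
  by (auto simp: Let_def split: if_splits; presburger)

lemma colSame:
  assumes "\<not> (i = 2*k+1 \<and> j = 1)" "\<not> (i = 2*k+2 \<and> j = 1)"
  shows "col k i j = col (Suc k) i j"
  using assms unfolding col_def by auto

lemma colNot:
  assumes "\<not> (i = 2*k+1 \<and> j = 1)" "\<not> (i = 2*k+2 \<and> j = 1)"
  shows "\<not> (col (Suc k) i j = 2*k+1 \<and> j = 1)" "\<not> (col (Suc k) i j = 2*k+2 \<and> j = 1)"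
  using assms unfolding col_def by (auto split: if_splits; presburger)+

lemma col2k:
  assumes "\<not> (i = 2*k+1 \<and> j = 1)" "\<not> (i = 2*k+2 \<and> j = 1)"
  shows "(col (Suc k) i j = 2*k) = (i = 2*k)"
  using assms unfolding col_def by (auto split: if_splits)

lemma colOdd:
  assumes "\<not> (i = 2*k+1 \<and> j = 1)" "\<not> (i = 2*k+2 \<and> j = 1)" "j \<ge> 1"
  shows "(col (Suc k) i j mod 2 = 1 \<and> col (Suc k) i j \<ge> 2*k+1) =
     (i = 2*k+1 \<or> (odd i \<and> i \<ge> 2*k+3 \<and> j \<ge> 2) \<or> (even i \<and> i \<ge> 2*k+4 \<and> j = 1))"
proof (cases i rule: par_cases)
  case (1 a)
  then show ?thesis using assms unfolding col_def by (cases a k rule: reg4; auto; presburger)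
next
  case (2 a)
  then show ?thesis using assms unfolding col_def by (cases a k rule: reg4; auto; presburger)
qed

lemma stepGen:
  assumes "k < n" "(i,j) \<noteq> (2*k+1,1)" "(i,j) \<noteq> (2*k+2,1)" "(i',j') \<noteq> (2*k+1,1)" "(i',j') \<noteq> (2*k+2,1)"
  shows "H n k (i,j) (i',j') = (H n (Suc k) (i,j) (i',j') \<noteq>
     ((H n (Suc k) (i,j) (2*k+1,1) \<and> H n (Suc k) (i',j') (2*k+2,1) \<or> H n (Suc k) (i,j) (2*k+2,1) \<and> H n (Suc k) (i',j') (2*k+1,1)) \<and>
      \<not> (H n (Suc k) (i,j) (2*k+1,1) \<and> H n (Suc k) (i,j) (2*k+2,1) \<and> H n (Suc k) (i',j') (2*k+1,1) \<and> H n (Suc k) (i',j') (2*k+2,1))))"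
proof -
  have nu: "\<not> (i = 2*k+1 \<and> j = 1)" "\<not> (i = 2*k+2 \<and> j = 1)" "\<not> (i' = 2*k+1 \<and> j' = 1)" "\<not> (i' = 2*k+2 \<and> j' = 1)"
    using assms by auto
  have Z: "(Zn k (col (Suc k) i j) j (col (Suc k) i' j') j' \<or> Zn k (col (Suc k) i' j') j' (col (Suc k) i j) j) =
    ((Zn (Suc k) (col (Suc k) i j) j (col (Suc k) i' j') j' \<or> Zn (Suc k) (col (Suc k) i' j') j' (col (Suc k) i j) j) \<noteq>
     ((i = 2*k \<and> col (Suc k) i' j' mod 2 = 1 \<and> col (Suc k) i' j' \<ge> 2*k+1) \<or> (i' = 2*k \<and> col (Suc k) i j mod 2 = 1 \<and> col (Suc k) i j \<ge> 2*k+1)))"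
    using Zdiff[OF colNot[OF nu(1,2)] colNot[OF nu(3,4)]] col2k[OF nu(1,2)] col2k[OF nu(3,4)] by simp
  let ?B = "\<lambda>i j. i = 2*k+1 \<or> (odd i \<and> i \<ge> 2*k+3 \<and> j \<ge> 2) \<or> (even i \<and> i \<ge> 2*k+4 \<and> (j::nat) = 1)"
  show ?thesis
  proof (cases "(i,j) \<in> grid n \<and> (i',j') \<in> grid n")
    case False
    then show ?thesis by (auto simp: H_def)
  next
    case True
    then have j1: "j \<ge> 1" "j' \<ge> 1" unfolding grid_def by auto
    let ?S = "Zn (Suc k) (col (Suc k) i j) j (col (Suc k) i' j') j' \<or> Zn (Suc k) (col (Suc k) i' j') j' (col (Suc k) i j) j"
    have Hk: "H n k (i,j) (i',j') = (?S \<noteq> (i = 2*k \<and> ?B i' j' \<or> i' = 2*k \<and> ?B i j))"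
      using True unfolding H_expl colSame[OF nu(1,2)] colSame[OF nu(3,4)] Z
        colOdd[OF nu(1,2) j1(1)] colOdd[OF nu(3,4) j1(2)] unfolding grid_def by simp
    have Hk1: "H n (Suc k) (i,j) (i',j') = ?S"
      using True unfolding H_expl grid_def by simp
    have a1: "H n (Suc k) (i,j) (2*k+1,1) = (i = 2*k)" "H n (Suc k) (i',j') (2*k+1,1) = (i' = 2*k)"
      using True nu unfolding nbA[OF assms(1)] by auto
    have b1: "H n (Suc k) (i,j) (2*k+2,1) = ?B i j" "H n (Suc k) (i',j') (2*k+2,1) = ?B i' j'"
      using True unfolding nbB[OF assms(1)] by auto
    have ex: "i = 2*k \<Longrightarrow> \<not> ?B i j" "i' = 2*k \<Longrightarrow> \<not> ?B i' j'" by auto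
    show ?thesis unfolding Hk Hk1 a1 b1 using ex by blast
  qed
qed



lemma c1: "col k (2*k+1) 1 = 2*k+2" unfolding col_def by simp
lemma c2: "col k (2*k+2) 1 = 2*k+1" unfolding col_def by simp

lemma bdB:
  assumes "k < n" "\<not> (i' = 2*k+1 \<and> j' = 1)" "\<not> (i' = 2*k+2 \<and> j' = 1)"
  shows "H n k (2*k+1,1) (i',j') = ((i',j') \<in> grid n \<and> (i' = 2*k+1 \<or> (odd i' \<and> i' \<ge> 2*k+3 \<and> j' \<ge> 2) \<or> (even i' \<and> i' \<ge> 2*k+4 \<and> j' = 1)))"
proof (cases i' rule: par_cases)
  case (1 b)
  then show ?thesis using assms unfolding H_expl grid_def c1 unfolding Zn_def col_def by (cases b k rule: reg4; auto; arith)
next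
  case (2 b)
  then show ?thesis using assms unfolding H_expl grid_def c1 unfolding Zn_def col_def by (cases b k rule: reg4; auto; arith)
qed

lemma bdA:
  assumes "k < n" "\<not> (i' = 2*k+1 \<and> j' = 1)" "\<not> (i' = 2*k+2 \<and> j' = 1)"
  shows "H n k (2*k+2,1) (i',j') = ((i',j') \<in> grid n \<and> i' = 2*k)"
proof (cases i' rule: par_cases)
  case (1 b)
  then show ?thesis using assms unfolding H_expl grid_def c2 unfolding Zn_def col_def by (cases b k rule: reg4; cases "j' = 1"; simp; arith)
next
  case (2 b)
  then show ?thesis using assms unfolding H_expl grid_def c2 unfolding Zn_def col_def by (cases b k rule: reg4; cases "j' = 1"; simp; arith)
qed


lemma Huv: "k < n \<Longrightarrow> H n k (2*k+1,1) (2*k+2,1)"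
  unfolding H_expl c1 c2 Zn_def by auto

lemma H_sym: "H n k p q = H n k q p"
  unfolding H_def by auto

lemma H_irr: "\<not> H n k p p"
  unfolding H_def Zr_def by (auto simp: Let_def)

lemma pivot_formula:
  assumes sym: "\<And>x y. G x y = G y x" and irr: "\<And>x. \<not> G x x" and uv: "G u v"
  shows "pivot G u v x y =
    (if x = y then G x y
     else if x = u \<and> y = v \<or> x = v \<and> y = u then True
     else if x = u then G v y else if x = v then G u y
     else if y = u then G x v else if y = v then G x u
     else (G x y \<noteq> ((G x u \<and> G y v \<or> G x v \<and> G y u) \<and> \<not> (G x u \<and> G x v \<and> G y u \<and> G y v))))"
proof -
  have s: "G u x = G x u" "G v x = G x v" "G u y = G y u" "G v y = G y v" "G y x = G x y" "G v u" "G u v"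
    "\<not> G u u" "\<not> G v v" "\<not> G x x" "\<not> G y y"
    using sym uv irr by blast+
  show ?thesis
    unfolding pivot_def local_comp_def
    using s by (smt (verit))
qed

lemma step:
  assumes kn: "k < n"
  shows "pivot (H n (Suc k)) (2*k+1,1) (2*k+2,1) = H n k"
proof (intro ext)
  fix x y :: "nat \<times> nat"
  obtain i j where x: "x = (i,j)" by fastforce
  obtain i' j' where y: "y = (i',j')" by fastforce
  let ?u = "(2*k+1, 1::nat)" and ?v = "(2*k+2, 1::nat)"
  have kn1: "k < n" using kn .
  have uv1: "H n (Suc k) ?u ?v" using nbB[OF kn, of "2*k+1" 1] kn unfolding grid_def by auto
  note pf = pivot_formula[of "H n (Suc k)", OF H_sym H_irr uv1]
  show "pivot (H n (Suc k)) ?u ?v x y = H n k x y"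
  proof (cases "x = y")
    case True then show ?thesis unfolding pf using H_irr by simp
  next
    case xy: False
    show ?thesis
    proof (cases "x = ?u \<and> y = ?v \<or> x = ?v \<and> y = ?u")
      case True then show ?thesis unfolding pf using Huv[OF kn] H_sym xy by auto
    next
      case nuv: False
      show ?thesis
      proof (cases "x = ?u")
        case xu: True
        then have yn: "\<not> (i' = 2*k+1 \<and> j' = 1)" "\<not> (i' = 2*k+2 \<and> j' = 1)" using xy nuv y by auto
        have "pivot (H n (Suc k)) ?u ?v x y = H n (Suc k) y ?v" unfolding pf using xy nuv xu H_sym by auto
        also have "\<dots> = H n k x y" unfolding xu y nbB[OF kn] bdB[OF kn yn] by simp
        finally show ?thesis .
      next
        case xnu: False
        show ?thesis
        proof (cases "x = ?v")
          case xv: True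
          then have yn: "\<not> (i' = 2*k+1 \<and> j' = 1)" "\<not> (i' = 2*k+2 \<and> j' = 1)" using xy nuv y by auto
          have "pivot (H n (Suc k)) ?u ?v x y = H n (Suc k) y ?u" unfolding pf using xy nuv xnu xv H_sym by auto
          also have "\<dots> = H n k x y" unfolding xv y nbA[OF kn] bdA[OF kn yn] using yn by auto
          finally show ?thesis .
        next
          case xnv: False
          have xn: "\<not> (i = 2*k+1 \<and> j = 1)" "\<not> (i = 2*k+2 \<and> j = 1)" using xnu xnv x by auto
          show ?thesis
          proof (cases "y = ?u")
            case yu: True
            have "pivot (H n (Suc k)) ?u ?v x y = H n (Suc k) x ?v" unfolding pf using xy nuv xnu xnv yu by auto
            also have "\<dots> = H n k x y" unfolding yu x nbB[OF kn] H_sym[of n k "(i,j)"] bdB[OF kn xn] by simp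
            finally show ?thesis .
          next
            case ynu: False
            show ?thesis
            proof (cases "y = ?v")
              case yv: True
              have "pivot (H n (Suc k)) ?u ?v x y = H n (Suc k) x ?u" unfolding pf using xy nuv xnu xnv ynu yv by auto
              also have "\<dots> = H n k x y" unfolding yv x nbA[OF kn] H_sym[of n k "(i,j)"] bdA[OF kn xn] using xn by auto
              finally show ?thesis .
            next
              case ynv: False
              have "pivot (H n (Suc k)) ?u ?v x y = (H n (Suc k) x y \<noteq> ((H n (Suc k) x ?u \<and> H n (Suc k) y ?v \<or> H n (Suc k) x ?v \<and> H n (Suc k) y ?u) \<and> \<not> (H n (Suc k) x ?u \<and> H n (Suc k) x ?v \<and> H n (Suc k) y ?u \<and> H n (Suc k) y ?v)))"
                unfolding pf using xy nuv xnu xnv ynu ynv by auto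
              also have "\<dots> = H n k x y" unfolding x y
                using stepGen[OF kn, of i j i' j'] xnu xnv ynu ynv x y by auto
              finally show ?thesis .
            qed
          qed
        qed
      qed
    qed
  qed
qed


lemma pivots_H: "k \<le> n \<Longrightarrow> pivots k (H n k) = H n 0"
proof (induction k)
  case 0 then show ?case by simp
next
  case (Suc k)
  then show ?case using step[of k n] by simp
qed

lemma X_H: "X_graph n = H n n"
proof (intro ext)
  fix p q :: "nat \<times> nat"
  obtain i j where p: "p = (i,j)" by fastforce
  obtain i' j' where q: "q = (i',j')" by fastforce
  show "X_graph n p q = H n n p q"
    unfolding p q H_expl X_graph_def X_rel_def grid_def Zn_def col_def by auto
qed

lemma sw_grid: "p \<in> grid n \<Longrightarrow> sw 0 p \<in> grid n"
  unfolding sw_def grid_def by (cases p) (auto; presburger)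

lemma sw_inv: "p \<in> grid n \<Longrightarrow> sw 0 (sw 0 p) = p"
  unfolding sw_def grid_def by (cases p) (auto; presburger)

lemma sw_col: "sw k (a,b) = (col k a b, b)"
  by (simp add: sw_def col_def odd_iff_mod_2_eq_one)

lemma Y_H: "p \<in> grid n \<Longrightarrow> q \<in> grid n \<Longrightarrow> H n 0 p q = Y_graph n (sw 0 p) (sw 0 q)"
proof -
  assume pg: "p \<in> grid n" and qg: "q \<in> grid n"
  have g: "sw 0 p \<in> grid n" "sw 0 q \<in> grid n" using sw_grid pg qg by auto
  have z: "P \<in> grid n \<Longrightarrow> Q \<in> grid n \<Longrightarrow> Zr 0 P Q = Y_rel P Q" for P Q
    unfolding Zr_def Y_rel_def grid_def by (auto simp: Let_def)
  show ?thesis unfolding H_def Y_graph_def using pg qg g z by auto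
qed

theorem lemma12:
  fixes n :: nat
  assumes "n \<ge> 1"
  shows "graph_iso_on (grid n) (pivots n (X_graph n)) (grid n) (Y_graph n)"
  unfolding graph_iso_on_def X_H pivots_H[OF order_refl]
proof (intro exI conjI ballI)
  show "bij_betw (sw 0) (grid n) (grid n)"
    by (rule bij_betw_byWitness[where f' = "sw 0"]) (auto simp: sw_inv sw_grid)
next
  fix p q assume "p \<in> grid n" "q \<in> grid n"
  then show "H n 0 p q = Y_graph n (sw 0 p) (sw 0 q)" by (rule Y_H)
qed


end
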